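(* Let $\gamma\in\mathbb{R}\setminus\{0,1,2,-2\}$ and $\epsilon\in\mathbb{R}$. Let $\mathcal A$ be an associative algebra over $\mathbb{C}$ containing elements $a_j,a_j^{+}$ ($j=1,2,3$) satisfying the boson commutation relations \[ [a_j,a_k^{+}]=\delta_{jk},\qquad [a_j,a_k]=0,\qquad [a_j^{+},a_k^{+}]=0\qquad (j,k=1,2,3), \] where $[A,B]=AB-BA$. Define \[ Y=\frac{\gamma-2}{2(\gamma+2)}(a_1^{+})^2a_1-\frac{2\gamma\,a_1^{+}}{\gamma+2}\Big(1+\frac1\gamma a_2^{+}\Big)a_2,\qquad Z=\frac{\gamma-2}{\gamma+2}a_1^{+}a_1-\frac{2\gamma}{\gamma+2}\Big(1+\frac1\gamma a_2^{+}\Big)a_2, \] \[ X_1=a_1^{+}a_1+a_3^{+}a_3+\epsilon Y,\quad X_2=a_1,\quad X_3=a_3,\quad X_4=a_3^{+}a_3+\frac{2\gamma}{\gamma-2}\Big(1+\frac1\gamma a_2^{+}\Big)a_2 . \] Then these elements satisfy the commutation relations \[ [X_2,X_1]=X_2+\epsilon Z,\quad [X_2,X_4]=[X_2,X_3]=[X_1,X_4]=0,\quad [X_1,X_3]=-X_3,\quad [X_3,X_4]=X_3, \] \[ [X_1,Z]=-\epsilon\,\tfrac{\gamma-2}{\gamma+2}\,Y,\quad [X_1,Y]=Y,\quad [X_2,Y]=Z,\quad [X_2,Z]=\tfrac{\gamma-2}{\gamma+2}X_2,\quad [Z,Y]=\tfrac{\gamma-2}{\gamma+2}Y, \] \[ [X_3,Y]=[X_3,Z]=[X_4,Y]=[X_4,Z]=0,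 \] i.e. they give a realization of this Lie algebra in terms of boson annihilation and creation operators.
   Context: The intended model is $a_1^{+}=t$, $a_2^{+}=u$, $a_3^{+}=x$ (multiplication operators) and $a_1=\partial_t$, $a_2=\partial_u$, $a_3=\partial_x$, under which the listed elements become the approximate symmetry generators of $u_{tt}+\epsilon u_t=[(1+u/\gamma)^{\gamma-1}]_{xx}$ together with two auxiliary operators $Y,Z$. *)

theory Defs
  imports Complex_Main
begin

definition comm :: "'a::ring \<Rightarrow> 'a \<Rightarrow> 'a" where
  "comm A B = A * B - B * A"

text \<open>An associative unital algebra over the complex numbers is a ring with unit
  together with a unital ring homomorphism from the complex numbers into its centre
  (the structure map, giving scalar multiplication  c . A = emb c * A).\<close>
definition complex_algebra_emb :: "(complex \<Rightarrow> 'a::ring_1) \<Rightarrow> bool" where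
  "complex_algebra_emb emb \<longleftrightarrow>
     emb 1 = 1 \<and>
     (\<forall>x y. emb (x + y) = emb x + emb y) \<and>
     (\<forall>x y. emb (x * y) = emb x * emb y) \<and>
     (\<forall>x A. emb x * A = A * emb x)"

end

theory Submission
  imports Defs
begin

lemma comm_add_left: "comm (A + B) (C::'a::ring) = comm A C + comm B C"
  by (simp add: comm_def algebra_simps)
lemma comm_add_right: "comm (A::'a::ring) (B + C) = comm A B + comm A C"
  by (simp add: comm_def algebra_simps)
lemma comm_diff_left: "comm (A - B) (C::'a::ring) = comm A C - comm B C"
  by (simp add: comm_def algebra_simps)
lemma comm_diff_right: "comm (A::'a::ring) (B - C) = comm A B - comm A C"
  by (simp add: comm_def algebra_simps)
lemma comm_neg_left: "comm (- A) (C::'a::ring) = - comm A C"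
  by (simp add: comm_def algebra_simps)
lemma comm_neg_right: "comm (A::'a::ring) (- C) = - comm A C"
  by (simp add: comm_def algebra_simps)
lemma comm_mult_left: "comm (A * B) (C::'a::ring) = A * comm B C + comm A C * B"
  by (simp add: comm_def algebra_simps)
lemma comm_mult_right: "comm (A::'a::ring) (B * C) = comm A B * C + B * comm A C"
  by (simp add: comm_def algebra_simps)
lemma comm_zero_left: "comm 0 (A::'a::ring) = 0" by (simp add: comm_def)
lemma comm_zero_right: "comm (A::'a::ring) 0 = 0" by (simp add: comm_def)
lemma comm_one_left: "comm 1 (A::'a::ring_1) = 0" by (simp add: comm_def)
lemma comm_one_right: "comm (A::'a::ring_1) 1 = 0" by (simp add: comm_def)
lemma comm_self: "comm (A::'a::ring) A = 0" by (simp add: comm_def)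
lemma comm_antisym: "comm (A::'a::ring) B = - comm B A" by (simp add: comm_def)

lemmas comm_rules = comm_add_left comm_add_right comm_diff_left comm_diff_right
  comm_neg_left comm_neg_right comm_mult_left comm_mult_right comm_zero_left comm_zero_right
  comm_one_left comm_one_right comm_self

locale bos =
  fixes emb :: "complex \<Rightarrow> 'a::ring_1" and a ap :: "nat \<Rightarrow> 'a" and \<gamma> :: real
  assumes alg: "complex_algebra_emb emb"
    and ccr1: "\<And>j k. j \<in> {1,2,3} \<Longrightarrow> k \<in> {1,2,3} \<Longrightarrow>
                 comm (a j) (ap k) = (if j = k then 1 else 0)"
    and ccr2: "\<And>j k. j \<in> {1,2,3} \<Longrightarrow> k \<in> {1,2,3} \<Longrightarrow> comm (a j) (a k) = 0"
    and ccr3: "\<And>j k. j \<in> {1,2,3} \<Longrightarrow> k \<in> {1,2,3} \<Longrightarrow> comm (ap j) (ap k) = 0"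
begin

definition s :: "real \<Rightarrow> 'a" where "s r = emb (of_real r)"

lemma s_add: "s (x + y) = s x + s y"
  using alg unfolding complex_algebra_emb_def s_def by (metis of_real_add)
lemma s_mult: "s (x * y) = s x * s y"
  using alg unfolding complex_algebra_emb_def s_def by (metis of_real_mult)
lemma s_one: "s 1 = 1"
  using alg unfolding complex_algebra_emb_def s_def by (metis of_real_1)
lemma s_zero: "s 0 = 0"
  using s_add[of 0 0] by (simp add: s_def)
lemma s_neg: "s (- x) = - s x"
  using s_add[of x "-x"] s_zero by (simp add: eq_neg_iff_add_eq_0 add.commute)
lemma s_diff: "s (x - y) = s x - s y"
  using s_add[of x "-y"] s_neg[of y] by simp
lemma s2: "s 2 = 2"
  using s_add[of 1 1] s_one by simp
lemma s_dbl: "s (x * 2) = s x + s x"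
  using s_add[of x x] by (simp add: mult_2_right)
lemma s_central: "s r * A = A * s r"
  using alg unfolding complex_algebra_emb_def s_def by blast
lemma comm_s_left: "comm (s r) A = 0" by (simp add: comm_def s_central[of r A])
lemma comm_s_right: "comm A (s r) = 0" by (simp add: comm_def s_central[of r A])
lemma comm_smult_left: "comm (s r * A) B = s r * comm A B"
  by (simp add: comm_mult_left comm_s_left)
lemma comm_smult_right: "comm A (s r * B) = s r * comm A B"
  by (simp add: comm_mult_right comm_s_right)

lemma g1: "j \<in> {1,2,3} \<Longrightarrow> k \<in> {1,2,3} \<Longrightarrow> comm (a j) (ap k) = (if j = k then 1 else 0)"
  by (rule ccr1)
lemma g1': "j \<in> {1,2,3} \<Longrightarrow> k \<in> {1,2,3} \<Longrightarrow> comm (ap k) (a j) = (if j = k then -1 else 0)"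
  using ccr1[of j k] comm_antisym[of "ap k" "a j"] by simp
lemmas gens = g1 g1' ccr2 ccr3

definition "W = a 2 + s (1/\<gamma>) * (ap 2 * a 2)"
definition "D = a 1"
definition "T = ap 1 * a 1"
definition "Q = ap 1 * ap 1 * a 1"
definition "V = ap 1 * W"
definition "E = ap 3 * a 3"
definition "R = a 3"
definition "P = ap 1 * ap 1 * W"

lemma W_comm: "j \<in> {1,3} \<Longrightarrow> comm (a j) W = 0" "j \<in> {1,3} \<Longrightarrow> comm (ap j) W = 0"
  unfolding W_def by (auto simp: comm_rules comm_smult_right comm_s_left comm_s_right gens)
lemma W_comm': "j \<in> {1,3} \<Longrightarrow> comm W (a j) = 0" "j \<in> {1,3} \<Longrightarrow> comm W (ap j) = 0"
  using W_comm comm_antisym by (metis neg_equal_0_iff_equal)+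

definition "L d t q v w e r p = s d * D + s t * T + s q * Q + s v * V + s w * W + s e * E + s r * R + s p * P"

lemmas bsimps = comm_s_left comm_s_right comm_rules comm_smult_left comm_smult_right gens W_comm W_comm' s_add s_mult s_neg s_diff s_zero s_one

lemma bDD: "comm D D = 0"
  unfolding D_def T_def Q_def V_def E_def R_def P_def
  by (simp add: bsimps algebra_simps)
lemma bDT: "comm D T = D"
  unfolding D_def T_def Q_def V_def E_def R_def P_def
  by (simp add: bsimps algebra_simps)
lemma bDQ: "comm D Q = T + T"
  unfolding D_def T_def Q_def V_def E_def R_def P_def
  by (simp add: bsimps algebra_simps)
lemma bDV: "comm D V = W"
  unfolding D_def T_def Q_def V_def E_def R_def P_def
  by (simp add: bsimps algebra_simps)
lemma bDW: "comm D W = 0"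
  unfolding D_def T_def Q_def V_def E_def R_def P_def
  by (simp add: bsimps algebra_simps)
lemma bDE: "comm D E = 0"
  unfolding D_def T_def Q_def V_def E_def R_def P_def
  by (simp add: bsimps algebra_simps)
lemma bDR: "comm D R = 0"
  unfolding D_def T_def Q_def V_def E_def R_def P_def
  by (simp add: bsimps algebra_simps)
lemma bTD: "comm T D = - D"
  unfolding D_def T_def Q_def V_def E_def R_def P_def
  by (simp add: bsimps algebra_simps)
lemma bTT: "comm T T = 0"
  unfolding D_def T_def Q_def V_def E_def R_def P_def
  by (simp add: bsimps algebra_simps)
lemma bTQ: "comm T Q = Q"
  unfolding D_def T_def Q_def V_def E_def R_def P_def
  by (simp add: bsimps algebra_simps)
lemma bTV: "comm T V = V"
  unfolding D_def T_def Q_def V_def E_def R_def P_def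
  by (simp add: bsimps algebra_simps)
lemma bTW: "comm T W = 0"
  unfolding D_def T_def Q_def V_def E_def R_def P_def
  by (simp add: bsimps algebra_simps)
lemma bTE: "comm T E = 0"
  unfolding D_def T_def Q_def V_def E_def R_def P_def
  by (simp add: bsimps algebra_simps)
lemma bTR: "comm T R = 0"
  unfolding D_def T_def Q_def V_def E_def R_def P_def
  by (simp add: bsimps algebra_simps)
lemma bQD: "comm Q D = - T - T"
  unfolding D_def T_def Q_def V_def E_def R_def P_def
  by (simp add: bsimps algebra_simps)
lemma bQT: "comm Q T = - Q"
  unfolding D_def T_def Q_def V_def E_def R_def P_def
  by (simp add: bsimps algebra_simps)
lemma bQQ: "comm Q Q = 0"
  unfolding D_def T_def Q_def V_def E_def R_def P_def
  by (simp add: bsimps algebra_simps)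
lemma bQV: "comm Q V = P"
  unfolding D_def T_def Q_def V_def E_def R_def P_def
  by (simp add: bsimps algebra_simps)
lemma bQW: "comm Q W = 0"
  unfolding D_def T_def Q_def V_def E_def R_def P_def
  by (simp add: bsimps algebra_simps)
lemma bQE: "comm Q E = 0"
  unfolding D_def T_def Q_def V_def E_def R_def P_def
  by (simp add: bsimps algebra_simps)
lemma bQR: "comm Q R = 0"
  unfolding D_def T_def Q_def V_def E_def R_def P_def
  by (simp add: bsimps algebra_simps)
lemma bVD: "comm V D = - W"
  unfolding D_def T_def Q_def V_def E_def R_def P_def
  by (simp add: bsimps algebra_simps)
lemma bVT: "comm V T = - V"
  unfolding D_def T_def Q_def V_def E_def R_def P_def
  by (simp add: bsimps algebra_simps)
lemma bVQ: "comm V Q = - P"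
  unfolding D_def T_def Q_def V_def E_def R_def P_def
  by (simp add: bsimps algebra_simps)
lemma bVV: "comm V V = 0"
  unfolding D_def T_def Q_def V_def E_def R_def P_def
  by (simp add: bsimps algebra_simps)
lemma bVW: "comm V W = 0"
  unfolding D_def T_def Q_def V_def E_def R_def P_def
  by (simp add: bsimps algebra_simps)
lemma bVE: "comm V E = 0"
  unfolding D_def T_def Q_def V_def E_def R_def P_def
  by (simp add: bsimps algebra_simps)
lemma bVR: "comm V R = 0"
  unfolding D_def T_def Q_def V_def E_def R_def P_def
  by (simp add: bsimps algebra_simps)
lemma bWD: "comm W D = 0"
  unfolding D_def T_def Q_def V_def E_def R_def P_def
  by (simp add: bsimps algebra_simps)
lemma bWT: "comm W T = 0"
  unfolding D_def T_def Q_def V_def E_def R_def P_def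
  by (simp add: bsimps algebra_simps)
lemma bWQ: "comm W Q = 0"
  unfolding D_def T_def Q_def V_def E_def R_def P_def
  by (simp add: bsimps algebra_simps)
lemma bWV: "comm W V = 0"
  unfolding D_def T_def Q_def V_def E_def R_def P_def
  by (simp add: bsimps algebra_simps)
lemma bWW: "comm W W = 0"
  unfolding D_def T_def Q_def V_def E_def R_def P_def
  by (simp add: bsimps algebra_simps)
lemma bWE: "comm W E = 0"
  unfolding D_def T_def Q_def V_def E_def R_def P_def
  by (simp add: bsimps algebra_simps)
lemma bWR: "comm W R = 0"
  unfolding D_def T_def Q_def V_def E_def R_def P_def
  by (simp add: bsimps algebra_simps)
lemma bED: "comm E D = 0"
  unfolding D_def T_def Q_def V_def E_def R_def P_def
  by (simp add: bsimps algebra_simps)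
lemma bET: "comm E T = 0"
  unfolding D_def T_def Q_def V_def E_def R_def P_def
  by (simp add: bsimps algebra_simps)
lemma bEQ: "comm E Q = 0"
  unfolding D_def T_def Q_def V_def E_def R_def P_def
  by (simp add: bsimps algebra_simps)
lemma bEV: "comm E V = 0"
  unfolding D_def T_def Q_def V_def E_def R_def P_def
  by (simp add: bsimps algebra_simps)
lemma bEW: "comm E W = 0"
  unfolding D_def T_def Q_def V_def E_def R_def P_def
  by (simp add: bsimps algebra_simps)
lemma bEE: "comm E E = 0"
  unfolding D_def T_def Q_def V_def E_def R_def P_def
  by (simp add: bsimps algebra_simps)
lemma bER: "comm E R = - R"
  unfolding D_def T_def Q_def V_def E_def R_def P_def
  by (simp add: bsimps algebra_simps)
lemma bRD: "comm R D = 0"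
  unfolding D_def T_def Q_def V_def E_def R_def P_def
  by (simp add: bsimps algebra_simps)
lemma bRT: "comm R T = 0"
  unfolding D_def T_def Q_def V_def E_def R_def P_def
  by (simp add: bsimps algebra_simps)
lemma bRQ: "comm R Q = 0"
  unfolding D_def T_def Q_def V_def E_def R_def P_def
  by (simp add: bsimps algebra_simps)
lemma bRV: "comm R V = 0"
  unfolding D_def T_def Q_def V_def E_def R_def P_def
  by (simp add: bsimps algebra_simps)
lemma bRW: "comm R W = 0"
  unfolding D_def T_def Q_def V_def E_def R_def P_def
  by (simp add: bsimps algebra_simps)
lemma bRE: "comm R E = R"
  unfolding D_def T_def Q_def V_def E_def R_def P_def
  by (simp add: bsimps algebra_simps)
lemma bRR: "comm R R = 0"
  unfolding D_def T_def Q_def V_def E_def R_def P_def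
  by (simp add: bsimps algebra_simps)
lemmas bases = bDD bDT bDQ bDV bDW bDE bDR bTD bTT bTQ bTV bTW bTE bTR bQD bQT bQQ bQV bQW bQE bQR bVD bVT bVQ bVV bVW bVE bVR bWD bWT bWQ bWV bWW bWE bWR bED bET bEQ bEV bEW bEE bER bRD bRT bRQ bRV bRW bRE bRR

lemma cD: "comm (L d t q v w e r 0) D = L (-t) (-q-q) 0 0 (-v) 0 0 0"
  unfolding L_def by (simp add: comm_add_left comm_smult_left bases s_zero s_neg s_add s_diff s_dbl algebra_simps)
lemma cT: "comm (L d t q v w e r 0) T = L d 0 (-q) (-v) 0 0 0 0"
  unfolding L_def by (simp add: comm_add_left comm_smult_left bases s_zero s_neg s_add s_diff s_dbl algebra_simps)
lemma cQ: "comm (L d t q v w e r 0) Q = L 0 (d+d) t 0 0 0 0 (-v)"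
  unfolding L_def by (simp add: comm_add_left comm_smult_left bases s_zero s_neg s_add s_diff s_dbl algebra_simps)
lemma cV: "comm (L d t q v w e r 0) V = L 0 0 0 t d 0 0 q"
  unfolding L_def by (simp add: comm_add_left comm_smult_left bases s_zero s_neg s_add s_diff s_dbl algebra_simps)
lemma cW: "comm (L d t q v w e r 0) W = L 0 0 0 0 0 0 0 0"
  unfolding L_def by (simp add: comm_add_left comm_smult_left bases s_zero s_neg s_add s_diff s_dbl algebra_simps)
lemma cE: "comm (L d t q v w e r 0) E = L 0 0 0 0 0 0 r 0"
  unfolding L_def by (simp add: comm_add_left comm_smult_left bases s_zero s_neg s_add s_diff s_dbl algebra_simps)
lemma cR: "comm (L d t q v w e r 0) R = L 0 0 0 0 0 0 (-e) 0"
  unfolding L_def by (simp add: comm_add_left comm_smult_left bases s_zero s_neg s_add s_diff s_dbl algebra_simps)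

lemma L_smult: "s c * L d t q v w e r p = L (c*d) (c*t) (c*q) (c*v) (c*w) (c*e) (c*r) (c*p)"
  unfolding L_def by (simp add: s_mult algebra_simps)
lemma L_add: "L d t q v w e r p + L d' t' q' v' w' e' r' p' = L (d+d') (t+t') (q+q') (v+v') (w+w') (e+e') (r+r') (p+p')"
  unfolding L_def by (simp add: s_add algebra_simps)
lemma L_neg: "- L d t q v w e r p = L (-d) (-t) (-q) (-v) (-w) (-e) (-r) (-p)"
  unfolding L_def by (simp add: s_neg algebra_simps)
lemma L_eq: "d=d' \<Longrightarrow> t=t' \<Longrightarrow> q=q' \<Longrightarrow> v=v' \<Longrightarrow> w=w' \<Longrightarrow> e=e' \<Longrightarrow> r=r' \<Longrightarrow> p=p' \<Longrightarrow> L d t q v w e r p = L d' t' q' v' w' e' r' p'"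
  by simp
lemma L_eq0: "d=0 \<Longrightarrow> t=0 \<Longrightarrow> q=0 \<Longrightarrow> v=0 \<Longrightarrow> w=0 \<Longrightarrow> e=0 \<Longrightarrow> r=0 \<Longrightarrow> p=0 \<Longrightarrow> L d t q v w e r p = 0"
  by (simp add: L_def s_zero)

lemma comm_LL: "comm (L d t q v w e r 0) (L d' t' q' v' w' e' r' 0) =
  L (-t*d' + d*t') (-2*q*d' + 2*d*q') (-q*t' + t*q') (-v*t' + t*v') (-v*d' + d*v') 0 (r*e' - e*r') (-v*q' + q*v')"
proof -
  have eq: "L d' t' q' v' w' e' r' 0 = s d' * D + s t' * T + s q' * Q + s v' * V + s w' * W + s e' * E + s r' * R"
    by (simp add: L_def s_zero)
  show ?thesis
    apply (subst eq)
    apply (simp only: comm_add_right comm_smult_right cD cT cQ cV cW cE cR L_smult L_add)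
    by (rule L_eq) (simp_all add: algebra_simps)
qed

end

theorem proposition2:
  fixes emb :: "complex \<Rightarrow> 'a::ring_1"
    and a ap :: "nat \<Rightarrow> 'a"
    and \<gamma> \<epsilon> :: real
    and Y Z X1 X2 X3 X4 :: 'a
  assumes alg: "complex_algebra_emb emb"
    and gamma: "\<gamma> \<noteq> 0" "\<gamma> \<noteq> 1" "\<gamma> \<noteq> 2" "\<gamma> \<noteq> -2"
    and ccr1: "\<And>j k. j \<in> {1,2,3} \<Longrightarrow> k \<in> {1,2,3} \<Longrightarrow>
                 comm (a j) (ap k) = (if j = k then 1 else 0)"
    and ccr2: "\<And>j k. j \<in> {1,2,3} \<Longrightarrow> k \<in> {1,2,3} \<Longrightarrow> comm (a j) (a k) = 0"
    and ccr3: "\<And>j k. j \<in> {1,2,3} \<Longrightarrow> k \<in> {1,2,3} \<Longrightarrow> comm (ap j) (ap k) = 0"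
    and Y_def: "Y = emb (of_real ((\<gamma> - 2) / (2 * (\<gamma> + 2)))) * (ap 1)\<^sup>2 * a 1
                   - emb (of_real (2 * \<gamma> / (\<gamma> + 2))) * ap 1
                     * (1 + emb (of_real (1 / \<gamma>)) * ap 2) * a 2"
    and Z_def: "Z = emb (of_real ((\<gamma> - 2) / (\<gamma> + 2))) * ap 1 * a 1
                   - emb (of_real (2 * \<gamma> / (\<gamma> + 2)))
                     * (1 + emb (of_real (1 / \<gamma>)) * ap 2) * a 2"
    and X1_def: "X1 = ap 1 * a 1 + ap 3 * a 3 + emb (of_real \<epsilon>) * Y"
    and X2_def: "X2 = a 1"
    and X3_def: "X3 = a 3"
    and X4_def: "X4 = ap 3 * a 3 + emb (of_real (2 * \<gamma> / (\<gamma> - 2)))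
                     * (1 + emb (of_real (1 / \<gamma>)) * ap 2) * a 2"
  shows "comm X2 X1 = X2 + emb (of_real \<epsilon>) * Z
       \<and> comm X2 X4 = 0 \<and> comm X2 X3 = 0 \<and> comm X1 X4 = 0
       \<and> comm X1 X3 = - X3 \<and> comm X3 X4 = X3
       \<and> comm X1 Z = - (emb (of_real (\<epsilon> * (\<gamma> - 2) / (\<gamma> + 2))) * Y)
       \<and> comm X1 Y = Y \<and> comm X2 Y = Z
       \<and> comm X2 Z = emb (of_real ((\<gamma> - 2) / (\<gamma> + 2))) * X2
       \<and> comm Z Y = emb (of_real ((\<gamma> - 2) / (\<gamma> + 2))) * Y
       \<and> comm X3 Y = 0 \<and> comm X3 Z = 0 \<and> comm X4 Y = 0 \<and> comm X4 Z = 0"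
proof -
  interpret B: bos emb a ap \<gamma>
    unfolding bos_def using alg ccr1 ccr2 ccr3 by blast
  have e: "\<And>r. emb (of_real r) = B.s r" by (simp add: B.s_def)
  have g1: "\<gamma> + 2 \<noteq> 0" using gamma by linarith
  have g2: "\<gamma> - 2 \<noteq> 0" using gamma by linarith
  have g3: "4 + \<gamma> * 2 \<noteq> 0" "\<gamma> * 2 + 4 \<noteq> 0" "2 * \<gamma> + 4 \<noteq> 0" using gamma by linarith+
  have g4: "2 + \<gamma> \<noteq> 0" "\<gamma> + 2 \<noteq> 0" using gamma by linarith+
  have g5: "\<gamma> * 2 - 4 \<noteq> 0" "2 * \<gamma> - 4 \<noteq> 0" "\<gamma> - 2 \<noteq> 0" using gamma by linarith+
  have g6: "\<gamma> \<noteq> 2" "\<gamma> \<noteq> -2" using gamma by auto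
  have hW: "(1 + B.s (1/\<gamma>) * ap 2) * a 2 = B.W"
    by (simp add: B.W_def algebra_simps)
  have LD: "B.D = B.L 1 0 0 0 0 0 0 0" by (simp add: B.L_def B.s_zero B.s_one)
  have LT: "B.T = B.L 0 1 0 0 0 0 0 0" by (simp add: B.L_def B.s_zero B.s_one)
  have LE: "B.E = B.L 0 0 0 0 0 1 0 0" by (simp add: B.L_def B.s_zero B.s_one)
  have LR: "B.R = B.L 0 0 0 0 0 0 1 0" by (simp add: B.L_def B.s_zero B.s_one)
  have LW: "B.W = B.L 0 0 0 0 1 0 0 0" by (simp add: B.L_def B.s_zero B.s_one)
  have hY: "Y = B.L 0 0 ((\<gamma> - 2) / (2 * (\<gamma> + 2))) (- (2 * \<gamma> / (\<gamma> + 2))) 0 0 0 0"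
    unfolding Y_def e
    by (simp add: mult.assoc hW power2_eq_square B.L_def B.Q_def B.V_def B.s_zero B.s_neg)
  have hZ: "Z = B.L 0 ((\<gamma> - 2) / (\<gamma> + 2)) 0 0 (- (2 * \<gamma> / (\<gamma> + 2))) 0 0 0"
    unfolding Z_def e
    by (simp add: mult.assoc hW B.L_def B.T_def B.s_zero B.s_neg)
  have hX1: "X1 = B.L 0 1 (\<epsilon> * ((\<gamma> - 2) / (2 * (\<gamma> + 2)))) (\<epsilon> * (- (2 * \<gamma> / (\<gamma> + 2)))) (\<epsilon> * 0) 1 0 (\<epsilon> * 0)"
  proof -
    have "X1 = B.T + B.E + B.s \<epsilon> * Y" unfolding X1_def e B.T_def B.E_def ..
    also have "\<dots> = B.L 0 1 (\<epsilon> * ((\<gamma> - 2) / (2 * (\<gamma> + 2)))) (\<epsilon> * (- (2 * \<gamma> / (\<gamma> + 2)))) (\<epsilon> * 0) 1 0 (\<epsilon> * 0)"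
      unfolding LT LE hY B.L_smult B.L_add by (rule B.L_eq) simp_all
    finally show ?thesis .
  qed
  have hX1': "X1 = B.L 0 1 (\<epsilon> * ((\<gamma> - 2) / (2 * (\<gamma> + 2)))) (\<epsilon> * (- (2 * \<gamma> / (\<gamma> + 2)))) 0 1 0 0"
    using hX1 by simp
  have hX2: "X2 = B.L 1 0 0 0 0 0 0 0" unfolding X2_def LD[symmetric] B.D_def ..
  have hX3: "X3 = B.L 0 0 0 0 0 0 1 0" unfolding X3_def LR[symmetric] B.R_def ..
  have hX4: "X4 = B.L 0 0 0 0 (2 * \<gamma> / (\<gamma> - 2)) 1 0 0"
  proof -
    have "X4 = B.E + B.s (2 * \<gamma> / (\<gamma> - 2)) * B.W"
      unfolding X4_def e B.E_def by (simp add: mult.assoc hW)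
    also have "\<dots> = B.L 0 0 0 0 (2 * \<gamma> / (\<gamma> - 2)) 1 0 0"
      unfolding LE LW B.L_smult B.L_add by (rule B.L_eq) simp_all
    finally show ?thesis .
  qed
  note defs = hX1' hX2 hX3 hX4 hY hZ e
  note rw = B.comm_LL B.L_smult B.L_add B.L_neg
  show ?thesis
    unfolding defs
    apply (intro conjI)
    apply (simp_all only: rw)
    apply ((rule B.L_eq0 B.L_eq); simp add: field_simps g1 g2 g3 g4 g5 g6)+
    done
qed

end
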